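(* Let $n\ge 1$ and $d\ge 0$. Consider the set $\mathcal B_{n,d}$ of all directed multigraphs with output pair $H=(V,E,(a,b))$, taken up to isomorphism, such that $|V|\le \min\{n,2+2d\}$, $|E|\le d$, and no node of $V\setminus\{a,b\}$ is isolated. Then $\{P_H : H\in\mathcal B_{n,d}\}$ is a basis of the real vector space of all $S_n$-equivariant polynomial maps $P:\mathbb R^{n\times n}\to\mathbb R^{n\times n}$ of degree at most $d$.
   Context: A directed multigraph with output pair is $H=(V,E,(a,b))$ with $V=[m]=\{1,\dots,m\}$, $E$ a finite multiset of ordered pairs $(r,s)\in V\times V$ (parallel edges and self-loops allowed), and $a,b\in V$ a distinguished, not necessarily distinct, pair called the red edge (it is not an element of $E$). A node is isolated if no edge of $E$ is incident to it. Two such multigraphs are isomorphic if there is a bijection of node sets carrying the edge multiset onto the edge multiset (with multiplicities) and the red pair $(a,b)$ onto the red pair. For $X\in\mathbb R^{n\times n}$, $P_H(X)\in\mathbb R^{n\times n}$ is defined by $P_H(X)_{i_a,i_b}=\sum_{j\in[n]^m,\ j_a=i_a,\ j_b=i_b}\ \prod_{(r,s)\in E}X_{j_r,j_s}$ (product over $E$ with multiplicity; empty product $=1$); if $a=b$ this formula defines the diagonal entries and all off-diagonal entries of $P_H(X)$ are $0$. The symmetric group $S_n$ acts on $\mathbb R^{n\times n}$ by $(g\cdot X)_{ij}=X_{g^{-1}(i),g^{-1}(j)}$. A polynomial map $P:\mathbb R^{n\times n}\to\mathbb R^{n\times n}$ (each entry a polynomial in the entries of $X$) is equivariant if $P(g\cdot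 X)=g\cdot P(X)$ for all $g\in S_n$ and all $X$. *)

theory Defs
  imports Complex_Main "HOL-Library.Multiset" "HOL-Library.FuncSet"
          "HOL-Combinatorics.Permutations"
begin

(* n x n real matrices are represented as functions nat => nat => real;
   only the entries with indices in {0..<n} are meaningful. *)
type_synonym mat = "nat \<Rightarrow> nat \<Rightarrow> real"

(* A directed multigraph with output pair: (m, E, a, b) with node set {1..m},
   edge multiset E, red pair (a,b). *)
type_synonym mgraph = "nat \<times> (nat \<times> nat) multiset \<times> nat \<times> nat"

definition nodes :: "mgraph \<Rightarrow> nat set" where
  "nodes H = {1..fst H}"

definition edges :: "mgraph \<Rightarrow> (nat \<times> nat) multiset" where
  "edges H = fst (snd H)"

definition out_a :: "mgraph \<Rightarrow> nat" where
  "out_a H = fst (snd (snd H))"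

definition out_b :: "mgraph \<Rightarrow> nat" where
  "out_b H = snd (snd (snd H))"

definition wf_mgraph :: "mgraph \<Rightarrow> bool" where
  "wf_mgraph H \<longleftrightarrow> out_a H \<in> nodes H \<and> out_b H \<in> nodes H \<and>
     (\<forall>e \<in># edges H. fst e \<in> nodes H \<and> snd e \<in> nodes H)"

definition isolated :: "mgraph \<Rightarrow> nat \<Rightarrow> bool" where
  "isolated H v \<longleftrightarrow> \<not> (\<exists>e \<in># edges H. fst e = v \<or> snd e = v)"

definition mgraph_iso :: "mgraph \<Rightarrow> mgraph \<Rightarrow> bool" where
  "mgraph_iso H H' \<longleftrightarrow> (\<exists>f. bij_betw f (nodes H) (nodes H') \<and>
      image_mset (map_prod f f) (edges H) = edges H' \<and>
      f (out_a H) = out_a H' \<and> f (out_b H) = out_b H')"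

definition iso_class :: "mgraph \<Rightarrow> mgraph set" where
  "iso_class H = {H'. wf_mgraph H' \<and> mgraph_iso H H'}"

definition admissible :: "nat \<Rightarrow> nat \<Rightarrow> mgraph \<Rightarrow> bool" where
  "admissible n d H \<longleftrightarrow> wf_mgraph H \<and> card (nodes H) \<le> min n (2 + 2 * d) \<and>
     size (edges H) \<le> d \<and>
     (\<forall>v \<in> nodes H - {out_a H, out_b H}. \<not> isolated H v)"

definition Bclasses :: "nat \<Rightarrow> nat \<Rightarrow> mgraph set set" where
  "Bclasses n d = iso_class ` {H. admissible n d H}"

(* P_H; matrix indices are 0..<n, entries outside are 0 *)
definition PH :: "nat \<Rightarrow> mgraph \<Rightarrow> mat \<Rightarrow> mat" where
  "PH n H X i k =
     (if i < n \<and> k < n \<and> (out_a H = out_b H \<longrightarrow> i = k) then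
        (\<Sum>j \<in> {j \<in> PiE (nodes H) (\<lambda>_. {..<n}). j (out_a H) = i \<and> j (out_b H) = k}.
           prod_mset (image_mset (\<lambda>(r, s). X (j r) (j s)) (edges H)))
      else 0)"

definition PC :: "nat \<Rightarrow> mgraph set \<Rightarrow> mat \<Rightarrow> mat" where
  "PC n C = PH n (SOME H. H \<in> C)"

definition monomial_exps :: "nat \<Rightarrow> nat \<Rightarrow> (nat \<times> nat \<Rightarrow> nat) set" where
  "monomial_exps n d = {\<alpha>. (\<forall>p. p \<notin> {..<n} \<times> {..<n} \<longrightarrow> \<alpha> p = 0) \<and>
                    (\<Sum>p \<in> {..<n} \<times> {..<n}. \<alpha> p) \<le> d}"

definition mono :: "nat \<Rightarrow> (nat \<times> nat \<Rightarrow> nat) \<Rightarrow> mat \<Rightarrow> real" where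
  "mono n \<alpha> X = (\<Prod>p \<in> {..<n} \<times> {..<n}. X (fst p) (snd p) ^ \<alpha> p)"

definition poly_map :: "nat \<Rightarrow> nat \<Rightarrow> (mat \<Rightarrow> mat) \<Rightarrow> bool" where
  "poly_map n d P \<longleftrightarrow>
     (\<forall>X i k. \<not> (i < n \<and> k < n) \<longrightarrow> P X i k = 0) \<and>
     (\<forall>i<n. \<forall>k<n. \<exists>c. \<forall>X. P X i k = (\<Sum>\<alpha> \<in> monomial_exps n d. c \<alpha> * mono n \<alpha> X))"

definition act :: "(nat \<Rightarrow> nat) \<Rightarrow> mat \<Rightarrow> mat" where
  "act g X = (\<lambda>i k. X (inv g i) (inv g k))"

definition equivariant :: "nat \<Rightarrow> (mat \<Rightarrow> mat) \<Rightarrow> bool" where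
  "equivariant n P \<longleftrightarrow> (\<forall>g X. g permutes {..<n} \<longrightarrow> P (act g X) = act g (P X))"

end

theory Submission
  imports Defs
begin


lemma mset_split_v: "filter_mset (\<lambda>u. u \<noteq> v) A + replicate_mset (count A v) v = A"
  by (rule multiset_eqI) auto

lemma mono_indep_aux:
  fixes c :: "'a multiset \<Rightarrow> real"
  assumes "finite V"
  shows "finite Ms \<Longrightarrow> (\<forall>A\<in>Ms. set_mset A \<subseteq> V) \<Longrightarrow>
    (\<forall>x. (\<Sum>A\<in>Ms. c A * prod_mset (image_mset x A)) = 0) \<Longrightarrow> \<forall>A\<in>Ms. c A = 0"
  using assms
proof (induction V arbitrary: Ms c rule: finite_induct)
  case empty
  then have "Ms \<subseteq> {{#}}" by auto
  then show ?case using empty.prems(3)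
    by (cases "Ms = {}") (auto dest: subset_singletonD)
next
  case (insert v V)
  define K where "K = (\<Sum>A\<in>Ms. size A)"
  define Ms' where "Ms' = (\<lambda>A. filter_mset (\<lambda>u. u \<noteq> v) A) ` Ms"
  define ck where "ck k B = (if B + replicate_mset k v \<in> Ms then c (B + replicate_mset k v) else 0)" for k B
  have finMs': "finite Ms'" using insert.prems(1) by (simp add: Ms'_def)
  have setMs': "\<forall>B\<in>Ms'. set_mset B \<subseteq> V" using insert.prems(2) by (auto simp: Ms'_def)
  have cntK: "count A v \<le> K" if "A \<in> Ms" for A
  proof -
    have "count A v \<le> size A" by (simp add: count_le_size)
    also have "\<dots> \<le> K" unfolding K_def
      by (simp add: sum.remove[OF insert.prems(1) that])
    finally show ?thesis .
  qed
  have prodsplit: "prod_mset (image_mset x A) = prod_mset (image_mset x (filter_mset (\<lambda>u. u \<noteq> v) A)) * x v ^ count A v" for x :: "'a \<Rightarrow> real" and A :: "'a multiset"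
  proof -
    have "prod_mset (image_mset x A) = prod_mset (image_mset x (filter_mset (\<lambda>u. u \<noteq> v) A + replicate_mset (count A v) v))"
      using mset_split_v[where A=A and v=v] by simp
    then show ?thesis by (simp del: mset_split_v)
  qed
  have ident: "(\<Sum>A\<in>Ms. c A * prod_mset (image_mset x A)) =
      (\<Sum>k\<le>K. (\<Sum>B\<in>Ms'. ck k B * prod_mset (image_mset x B)) * x v ^ k)" for x
  proof -
    have "(\<Sum>A\<in>Ms. c A * prod_mset (image_mset x A)) =
        (\<Sum>k\<in>{..K}. \<Sum>A\<in>{A\<in>Ms. count A v = k}. c A * prod_mset (image_mset x A))"
      by (rule sum.group[symmetric]) (use insert.prems(1) cntK in auto)
    also have "\<dots> = (\<Sum>k\<le>K. (\<Sum>B\<in>Ms'. ck k B * prod_mset (image_mset x B)) * x v ^ k)"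
    proof (rule sum.cong[OF refl])
      fix k assume "k \<in> {..K}"
      let ?S = "{A\<in>Ms. count A v = k}"
      let ?T = "{B\<in>Ms'. B + replicate_mset k v \<in> Ms}"
      have inj: "inj_on (\<lambda>A. filter_mset (\<lambda>u. u \<noteq> v) A) ?S"
      proof (rule inj_onI)
        fix A1 A2 assume "A1 \<in> ?S" "A2 \<in> ?S" "filter_mset (\<lambda>u. u \<noteq> v) A1 = filter_mset (\<lambda>u. u \<noteq> v) A2"
        then have "count A1 v = count A2 v" by simp
        then show "A1 = A2" using \<open>filter_mset (\<lambda>u. u \<noteq> v) A1 = filter_mset (\<lambda>u. u \<noteq> v) A2\<close>
          mset_split_v[where A=A1 and v=v] mset_split_v[where A=A2 and v=v] by metis
      qed
      have img: "(\<lambda>A. filter_mset (\<lambda>u. u \<noteq> v) A) ` ?S = ?T"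
      proof
        show "(\<lambda>A. filter_mset (\<lambda>u. u \<noteq> v) A) ` ?S \<subseteq> ?T"
          by (auto simp: Ms'_def mset_split_v)
        show "?T \<subseteq> (\<lambda>A. filter_mset (\<lambda>u. u \<noteq> v) A) ` ?S"
        proof
          fix B assume B: "B \<in> ?T"
          then obtain A where A: "A \<in> Ms" "B = filter_mset (\<lambda>u. u \<noteq> v) A" by (auto simp: Ms'_def)
          have "count B v = 0" using A by simp
          then have "count (B + replicate_mset k v) v = k" by simp
          moreover have "filter_mset (\<lambda>u. u \<noteq> v) (B + replicate_mset k v) = B"
            using A by (auto intro!: multiset_eqI)
          ultimately show "B \<in> (\<lambda>A. filter_mset (\<lambda>u. u \<noteq> v) A) ` ?S"
            using B by (metis (mono_tags, lifting) image_eqI mem_Collect_eq)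
        qed
      qed
      have "(\<Sum>A\<in>?S. c A * prod_mset (image_mset x A)) =
           (\<Sum>A\<in>?S. c A * prod_mset (image_mset x (filter_mset (\<lambda>u. u \<noteq> v) A))) * x v ^ k"
        unfolding sum_distrib_right
        by (rule sum.cong[OF refl]) (subst prodsplit, simp add: mult.assoc)
      also have "(\<Sum>A\<in>?S. c A * prod_mset (image_mset x (filter_mset (\<lambda>u. u \<noteq> v) A))) =
          (\<Sum>B\<in>?T. ck k B * prod_mset (image_mset x B))"
      proof -
        have "(\<Sum>B\<in>?T. ck k B * prod_mset (image_mset x B)) =
          (\<Sum>A\<in>?S. ck k (filter_mset (\<lambda>u. u \<noteq> v) A) * prod_mset (image_mset x (filter_mset (\<lambda>u. u \<noteq> v) A)))"
          by (subst img[symmetric], rule sum.reindex[OF inj, unfolded comp_def])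
        also have "\<dots> = (\<Sum>A\<in>?S. c A * prod_mset (image_mset x (filter_mset (\<lambda>u. u \<noteq> v) A)))"
        proof (rule sum.cong[OF refl])
          fix A assume "A \<in> ?S"
          then have "filter_mset (\<lambda>u. u \<noteq> v) A + replicate_mset k v = A" "A \<in> Ms"
            using mset_split_v[where A=A and v=v] by auto
          then show "ck k (filter_mset (\<lambda>u. u \<noteq> v) A) * prod_mset (image_mset x (filter_mset (\<lambda>u. u \<noteq> v) A)) =
                c A * prod_mset (image_mset x (filter_mset (\<lambda>u. u \<noteq> v) A))"
            by (simp add: ck_def)
        qed
        finally show ?thesis by simp
      qed
      also have "(\<Sum>B\<in>?T. ck k B * prod_mset (image_mset x B)) = (\<Sum>B\<in>Ms'. ck k B * prod_mset (image_mset x B))"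
        by (rule sum.mono_neutral_left) (auto simp: finMs' ck_def)
      finally show "(\<Sum>A\<in>?S. c A * prod_mset (image_mset x A)) =
          (\<Sum>B\<in>Ms'. ck k B * prod_mset (image_mset x B)) * x v ^ k" .
    qed
    finally show ?thesis .
  qed
  have indep_v: "prod_mset (image_mset (x(v := y)) B) = prod_mset (image_mset x B)" if "B \<in> Ms'" for x :: "'a \<Rightarrow> real" and y B
  proof -
    have "v \<notin> set_mset B" using that insert.hyps(2) setMs' by auto
    then show ?thesis by (intro arg_cong[where f=prod_mset] image_mset_cong) auto
  qed
  have ak0: "(\<Sum>B\<in>Ms'. ck k B * prod_mset (image_mset x B)) = 0" if "k \<le> K" for k x
  proof -
    have "\<forall>y. (\<Sum>k\<le>K. (\<Sum>B\<in>Ms'. ck k B * prod_mset (image_mset x B)) * y ^ k) = 0"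
    proof
      fix y
      have "0 = (\<Sum>A\<in>Ms. c A * prod_mset (image_mset (x(v:=y)) A))" using insert.prems(3) by simp
      also have "\<dots> = (\<Sum>k\<le>K. (\<Sum>B\<in>Ms'. ck k B * prod_mset (image_mset (x(v:=y)) B)) * (x(v:=y)) v ^ k)"
        by (rule ident)
      also have "\<dots> = (\<Sum>k\<le>K. (\<Sum>B\<in>Ms'. ck k B * prod_mset (image_mset x B)) * y ^ k)"
        by (simp add: indep_v)
      finally show "(\<Sum>k\<le>K. (\<Sum>B\<in>Ms'. ck k B * prod_mset (image_mset x B)) * y ^ k) = 0" by simp
    qed
    then show ?thesis using polyfun_eq_0[of "\<lambda>k. \<Sum>B\<in>Ms'. ck k B * prod_mset (image_mset x B)" K] that
      by auto
  qed
  have ck0: "ck k B = 0" if "k \<le> K" "B \<in> Ms'" for k B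
    using insert.IH[OF finMs' setMs', of "ck k"] ak0[OF that(1)] that(2) by blast
  show ?case
  proof
    fix A assume A: "A \<in> Ms"
    have "filter_mset (\<lambda>u. u \<noteq> v) A \<in> Ms'" using A by (simp add: Ms'_def)
    then have "ck (count A v) (filter_mset (\<lambda>u. u \<noteq> v) A) = 0" using ck0 cntK A by blast
    then show "c A = 0" using A mset_split_v[where A=A and v=v] by (simp add: ck_def)
  qed
qed



type_synonym triple = "nat \<times> nat \<times> (nat \<times> nat) multiset"

definition gm :: "(nat \<Rightarrow> nat) \<Rightarrow> (nat \<times> nat) multiset \<Rightarrow> (nat \<times> nat) multiset" where
  "gm h A = image_mset (map_prod h h) A"

definition Ms :: "nat \<Rightarrow> nat \<Rightarrow> (nat \<times> nat) multiset set" where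
  "Ms n d = {A. set_mset A \<subseteq> {..<n} \<times> {..<n} \<and> size A \<le> d}"

definition DD :: "nat \<Rightarrow> nat \<Rightarrow> triple set" where
  "DD n d = {(i,k,A). i < n \<and> k < n \<and> A \<in> Ms n d}"

definition mm :: "mat \<Rightarrow> (nat \<times> nat) multiset \<Rightarrow> real" where
  "mm X A = prod_mset (image_mset (\<lambda>(r,s). X r s) A)"

definition Fm :: "nat \<Rightarrow> nat \<Rightarrow> (triple \<Rightarrow> real) \<Rightarrow> mat \<Rightarrow> mat" where
  "Fm n d f X i k = (if i < n \<and> k < n then (\<Sum>A\<in>Ms n d. f (i,k,A) * mm X A) else 0)"

definition tact :: "(nat \<Rightarrow> nat) \<Rightarrow> triple \<Rightarrow> triple" where
  "tact g t = (g (fst t), g (fst (snd t)), gm g (snd (snd t)))"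

lemma finite_msets_bounded:
  assumes "finite S"
  shows "finite {A. set_mset A \<subseteq> S \<and> size A \<le> d}"
proof -
  have "{A. set_mset A \<subseteq> S \<and> size A \<le> d} \<subseteq> mset ` {xs. set xs \<subseteq> S \<and> length xs \<le> d}"
  proof
    fix A assume "A \<in> {A. set_mset A \<subseteq> S \<and> size A \<le> d}"
    moreover obtain xs where "mset xs = A" using ex_mset by blast
    ultimately show "A \<in> mset ` {xs. set xs \<subseteq> S \<and> length xs \<le> d}" by auto
  qed
  then show ?thesis using finite_lists_length_le[OF assms] finite_subset by blast
qed

lemma finite_Ms: "finite (Ms n d)"
  unfolding Ms_def by (rule finite_msets_bounded) simp

lemma finite_DD: "finite (DD n d)"
proof -
  have "DD n d \<subseteq> {..<n} \<times> {..<n} \<times> Ms n d" by (auto simp: DD_def)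
  then show ?thesis using finite_Ms finite_subset by blast
qed

lemma mm_curry: "mm (curry x) A = prod_mset (image_mset x A)"
proof -
  have "(\<lambda>(r,s). curry x r s) = x" by auto
  then show ?thesis by (simp add: mm_def)
qed

lemma coeff_unique:
  assumes "\<forall>X. (\<Sum>A\<in>Ms n d. c A * mm X A) = (\<Sum>A\<in>Ms n d. c' A * mm X A)"
  shows "\<forall>A\<in>Ms n d. c A = c' A"
proof -
  have h: "\<forall>x. (\<Sum>A\<in>Ms n d. (c A - c' A) * prod_mset (image_mset x A)) = 0"
  proof
    fix x :: "nat \<times> nat \<Rightarrow> real"
    have "(\<Sum>A\<in>Ms n d. (c A - c' A) * prod_mset (image_mset x A)) =
       (\<Sum>A\<in>Ms n d. c A * mm (curry x) A) - (\<Sum>A\<in>Ms n d. c' A * mm (curry x) A)"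
      by (simp add: mm_curry left_diff_distrib sum_subtractf)
    then show "(\<Sum>A\<in>Ms n d. (c A - c' A) * prod_mset (image_mset x A)) = 0" using assms by simp
  qed
  have "\<forall>A\<in>Ms n d. c A - c' A = 0"
    by (rule mono_indep_aux[where V="{..<n} \<times> {..<n}" and c="\<lambda>A. c A - c' A", OF _ finite_Ms _ h]) (auto simp: Ms_def)
  then show ?thesis by simp
qed

lemma Fm_unique:
  assumes "\<And>X i k. Fm n d f X i k = Fm n d f' X i k"
  shows "\<forall>t\<in>DD n d. f t = f' t"
proof
  fix t assume "t \<in> DD n d"
  then obtain i k A where t: "t = (i,k,A)" "i < n" "k < n" "A \<in> Ms n d" by (auto simp: DD_def)
  have "\<forall>X. (\<Sum>A\<in>Ms n d. f (i,k,A) * mm X A) = (\<Sum>A\<in>Ms n d. f' (i,k,A) * mm X A)"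
    using assms[of _ i k] t by (simp add: Fm_def)
  from coeff_unique[OF this] t show "f t = f' t" by simp
qed

lemma Fm_cong:
  assumes "\<forall>t\<in>DD n d. f t = f' t"
  shows "Fm n d f = Fm n d f'"
proof (intro ext)
  fix X i k
  show "Fm n d f X i k = Fm n d f' X i k"
    unfolding Fm_def using assms by (auto simp: DD_def intro!: sum.cong)
qed

lemma Fm_lin:
  assumes "finite S"
  shows "(\<Sum>C\<in>S. c C * Fm n d (h C) X i k) = Fm n d (\<lambda>t. \<Sum>C\<in>S. c C * h C t) X i k"
  unfolding Fm_def by (auto simp: sum_distrib_left sum_distrib_right mult.assoc intro: sum.swap)

lemma gm_comp: "gm g (gm h A) = gm (g \<circ> h) A"
  by (simp add: gm_def multiset.map_comp map_prod.comp)

lemma gm_id: "gm (\<lambda>x. x) A = A"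
  by (simp add: gm_def map_prod.id[unfolded id_def])

lemma gm_cong: "(\<And>x. x \<in> fst ` set_mset A \<union> snd ` set_mset A \<Longrightarrow> g x = h x) \<Longrightarrow> gm g A = gm h A"
  unfolding gm_def by (rule image_mset_cong) (force simp: map_prod_def split: prod.splits)

lemma tact_comp: "tact g (tact h t) = tact (g \<circ> h) t"
  by (simp add: tact_def gm_comp)

lemma tact_inv:
  assumes "g permutes S"
  shows "tact (inv g) (tact g t) = t" "tact g (tact (inv g) t) = t"
proof -
  have a: "inv g \<circ> g = (\<lambda>x. x)" "g \<circ> inv g = (\<lambda>x. x)"
    using permutes_inverses[OF assms] by auto
  show "tact (inv g) (tact g t) = t" "tact g (tact (inv g) t) = t"
    by (simp_all add: gm_comp a tact_def gm_id permutes_inverses[OF assms])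
qed

lemma perm_lt: "g permutes {..<n} \<Longrightarrow> (g x < n) = (x < n)"
  by (metis lessThan_iff permutes_in_image)

lemma tact_DD:
  assumes "g permutes {..<n}" "t \<in> DD n d"
  shows "tact g t \<in> DD n d"
  using assms perm_lt[OF assms(1)]
  by (force simp: DD_def Ms_def tact_def gm_def)

lemma mm_act: "mm (act g X) A = mm X (gm (inv g) A)"
  by (simp add: mm_def act_def gm_def multiset.map_comp comp_def split_def)

lemma Fm_act:
  assumes g: "g permutes {..<n}"
  shows "Fm n d f (act g X) i k = Fm n d (f \<circ> tact g) X (inv g i) (inv g k)"
proof -
  have ig: "inv g permutes {..<n}" using permutes_inv[OF g] .
  have lt: "(inv g i < n \<and> inv g k < n) = (i < n \<and> k < n)" using perm_lt[OF ig] by simp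
  have gi: "g (inv g x) = x" for x using permutes_inverses[OF g] by simp
  show ?thesis
  proof (cases "i < n \<and> k < n")
    case False then show ?thesis by (auto simp: Fm_def perm_lt[OF ig])
  next
    case True
    have "(\<Sum>A\<in>Ms n d. f (i,k,A) * mm (act g X) A) = (\<Sum>B\<in>Ms n d. f (i,k,gm g B) * mm X B)"
    proof (rule sum.reindex_bij_witness[where i="gm g" and j="gm (inv g)"])
      fix A assume "A \<in> Ms n d"
      have e: "gm g (gm (inv g) A) = A" using tact_inv(2)[OF g, of "(0,0,A)"] by (simp add: tact_def)
      then show "gm g (gm (inv g) A) = A" .
      show "gm (inv g) A \<in> Ms n d" using tact_DD[OF ig, where t="(0,0,A)" and d=d] \<open>A \<in> Ms n d\<close> True
        by (auto simp: DD_def tact_def)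
      show "f (i, k, gm g (gm (inv g) A)) * mm X (gm (inv g) A) = f (i, k, A) * mm (act g X) A"
        by (simp add: e mm_act)
    next
      fix B assume "B \<in> Ms n d"
      show "gm (inv g) (gm g B) = B" using tact_inv(1)[OF g, of "(0,0,B)"] by (simp add: tact_def)
      show "gm g B \<in> Ms n d" using tact_DD[OF g, where t="(0,0,B)" and d=d] \<open>B \<in> Ms n d\<close> True
        by (auto simp: DD_def tact_def)
    qed
    then show ?thesis using True lt by (simp add: Fm_def tact_def gi)
  qed
qed

lemma Fm_equivariant:
  assumes "\<forall>g. g permutes {..<n} \<longrightarrow> (\<forall>t\<in>DD n d. f (tact g t) = f t)"
  shows "equivariant n (Fm n d f)"
  unfolding equivariant_def
proof (intro allI impI)
  fix g X assume g: "g permutes {..<n}"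
  have "Fm n d (f \<circ> tact g) = Fm n d f" using assms g by (intro Fm_cong) auto
  then have "Fm n d f (act g X) i k = act g (Fm n d f X) i k" for i k
    using Fm_act[OF g, of d f X i k] by (simp add: act_def)
  then show "Fm n d f (act g X) = act g (Fm n d f X)" by (intro ext)
qed

lemma equivariant_Fm_inv:
  assumes "equivariant n (Fm n d f)" "g permutes {..<n}" "t \<in> DD n d"
  shows "f (tact g t) = f t"
proof -
  have gi: "inv g (g x) = x" for x using permutes_inverses[OF assms(2)] by simp
  have "Fm n d (f \<circ> tact g) X i k = Fm n d f X i k" for X i k
  proof -
    have "Fm n d (f \<circ> tact g) X i k = Fm n d f (act g X) (g i) (g k)" using Fm_act[OF assms(2)] gi by simp
    also have "\<dots> = act g (Fm n d f X) (g i) (g k)" using assms(1,2) by (simp add: equivariant_def)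
    also have "\<dots> = Fm n d f X i k" by (simp add: act_def gi)
    finally show ?thesis .
  qed
  from Fm_unique[OF this] assms(3) show ?thesis by simp
qed



definition Jset :: "nat \<Rightarrow> mgraph \<Rightarrow> (nat \<Rightarrow> nat) set" where
  "Jset n H = PiE (nodes H) (\<lambda>_. {..<n})"

definition tri :: "(nat \<Rightarrow> nat) \<Rightarrow> mgraph \<Rightarrow> triple" where
  "tri j H = (j (out_a H), j (out_b H), gm j (edges H))"

definition NN :: "nat \<Rightarrow> mgraph \<Rightarrow> triple \<Rightarrow> real" where
  "NN n H t = real (card {j \<in> Jset n H. tri j H = t})"

definition Sp :: "triple \<Rightarrow> nat set" where
  "Sp t = {fst t, fst (snd t)} \<union> fst ` set_mset (snd (snd t)) \<union> snd ` set_mset (snd (snd t))"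

definition good :: "mgraph \<Rightarrow> bool" where
  "good H \<longleftrightarrow> wf_mgraph H \<and> (\<forall>v \<in> nodes H - {out_a H, out_b H}. \<not> isolated H v)"

lemma finite_nodes[simp]: "finite (nodes H)" by (simp add: nodes_def)

lemma card_nodes: "card (nodes H) = fst H" by (simp add: nodes_def)

lemma finite_Jset: "finite (Jset n H)"
  unfolding Jset_def by (rule finite_PiE) auto

lemma wf_edge: "wf_mgraph H \<Longrightarrow> e \<in># edges H \<Longrightarrow> fst e \<in> nodes H \<and> snd e \<in> nodes H"
  by (simp add: wf_mgraph_def)

lemma set_gm: "set_mset (gm j A) = map_prod j j ` set_mset A"
  by (simp add: gm_def)

lemma Sp_tri:
  assumes "good H" "j \<in> Jset n H"
  shows "Sp (tri j H) = j ` nodes H"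
proof
  have wf: "wf_mgraph H" using assms(1) by (simp add: good_def)
  show "Sp (tri j H) \<subseteq> j ` nodes H"
    using wf by (force simp: Sp_def tri_def set_gm wf_mgraph_def)
  show "j ` nodes H \<subseteq> Sp (tri j H)"
  proof
    fix w assume "w \<in> j ` nodes H"
    then obtain v where v: "v \<in> nodes H" "w = j v" by auto
    show "w \<in> Sp (tri j H)"
    proof (cases "v \<in> {out_a H, out_b H}")
      case True then show ?thesis using v by (auto simp: Sp_def tri_def)
    next
      case False
      then have "\<not> isolated H v" using assms(1) v by (auto simp: good_def)
      then obtain e where e: "e \<in># edges H" "fst e = v \<or> snd e = v" by (auto simp: isolated_def)
      have "map_prod j j e \<in> set_mset (gm j (edges H))" using e by (simp add: set_gm)
      then show ?thesis using e v by (cases e) (force simp: Sp_def tri_def)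
    qed
  qed
qed

lemma Jset_lt: "j \<in> Jset n H \<Longrightarrow> v \<in> nodes H \<Longrightarrow> j v < n"
  by (auto simp: Jset_def)

lemma tri_DD:
  assumes "wf_mgraph H" "size (edges H) \<le> d" "j \<in> Jset n H"
  shows "tri j H \<in> DD n d"
proof -
  have "set_mset (gm j (edges H)) \<subseteq> {..<n} \<times> {..<n}"
    using assms(1,3) by (force simp: set_gm wf_mgraph_def Jset_def)
  then show ?thesis using assms by (auto simp: DD_def tri_def Ms_def gm_def wf_mgraph_def Jset_def)
qed

lemma pm_eq: "prod_mset (image_mset (\<lambda>(r, s). X (j r) (j s)) E) = mm X (gm j E)"
  by (simp add: mm_def gm_def multiset.map_comp comp_def split_def)

lemma PH_Fm:
  assumes wf: "wf_mgraph H" and sz: "size (edges H) \<le> d"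
  shows "PH n H = Fm n d (NN n H)"
proof (intro ext)
  fix X i k
  let ?J = "{j \<in> PiE (nodes H) (\<lambda>_. {..<n}). j (out_a H) = i \<and> j (out_b H) = k}"
  have finJ: "finite ?J" using finite_Jset[of n H] unfolding Jset_def by (rule finite_subset[rotated]) auto
  have PH': "PH n H X i k = (if i < n \<and> k < n then (\<Sum>j\<in>?J. mm X (gm j (edges H))) else 0)"
  proof (cases "out_a H = out_b H \<and> i \<noteq> k")
    case True
    then have "?J = {}" by auto
    then have z: "(\<Sum>j\<in>?J. mm X (gm j (edges H))) = 0" by (simp only: sum.empty)
    have cond: "\<not>(i < n \<and> k < n \<and> (out_a H = out_b H \<longrightarrow> i = k))" using True by auto
    show ?thesis by (simp only: PH_def cond if_False z if_cancel)
  next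
    case False
    then show ?thesis by (auto simp: PH_def pm_eq)
  qed
  show "PH n H X i k = Fm n d (NN n H) X i k"
  proof (cases "i < n \<and> k < n")
    case False then show ?thesis unfolding PH' Fm_def by auto
  next
    case True
    have img: "(\<lambda>j. gm j (edges H)) ` ?J \<subseteq> Ms n d"
    proof
      fix A assume "A \<in> (\<lambda>j. gm j (edges H)) ` ?J"
      then obtain j where "j \<in> Jset n H" "A = gm j (edges H)" by (auto simp: Jset_def)
      then show "A \<in> Ms n d" using tri_DD[OF wf sz, of j n] by (auto simp: DD_def tri_def)
    qed
    have "(\<Sum>j\<in>?J. mm X (gm j (edges H))) =
          (\<Sum>A\<in>Ms n d. \<Sum>j\<in>{j\<in>?J. gm j (edges H) = A}. mm X (gm j (edges H)))"
      by (rule sum.group[symmetric, OF finJ finite_Ms img])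
    also have "\<dots> = (\<Sum>A\<in>Ms n d. NN n H (i,k,A) * mm X A)"
    proof (rule sum.cong[OF refl])
      fix A assume "A \<in> Ms n d"
      have eq: "{j\<in>?J. gm j (edges H) = A} = {j \<in> Jset n H. tri j H = (i,k,A)}"
        by (auto simp: Jset_def tri_def)
      have "(\<Sum>j\<in>{j\<in>?J. gm j (edges H) = A}. mm X (gm j (edges H))) =
            (\<Sum>j\<in>{j\<in>?J. gm j (edges H) = A}. mm X A)" by (rule sum.cong) auto
      also have "\<dots> = real (card {j\<in>?J. gm j (edges H) = A}) * mm X A" by (rule sum_constant)
      also have "\<dots> = NN n H (i,k,A) * mm X A" by (simp only: eq NN_def)
      finally show "(\<Sum>j\<in>{j\<in>?J. gm j (edges H) = A}. mm X (gm j (edges H))) = NN n H (i,k,A) * mm X A" .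
    qed
    finally show ?thesis using True by (simp add: PH' Fm_def)
  qed
qed

lemma NN_tact_le:
  assumes wf: "wf_mgraph H" and g: "g permutes {..<n}"
  shows "card {j \<in> Jset n H. tri j H = t} \<le> card {j \<in> Jset n H. tri j H = tact g t}"
proof (rule card_inj_on_le[where f="\<lambda>j. restrict (g \<circ> j) (nodes H)"])
  show "finite {j \<in> Jset n H. tri j H = tact g t}"
    using finite_Jset by (rule finite_subset[rotated]) auto
  have ginj: "inj g" using permutes_inj[OF g] .
  show "inj_on (\<lambda>j. restrict (g \<circ> j) (nodes H)) {j \<in> Jset n H. tri j H = t}"
  proof (rule inj_onI)
    fix j1 j2 assume j: "j1 \<in> {j \<in> Jset n H. tri j H = t}" "j2 \<in> {j \<in> Jset n H. tri j H = t}"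
      and eq: "restrict (g \<circ> j1) (nodes H) = restrict (g \<circ> j2) (nodes H)"
    show "j1 = j2"
    proof (rule PiE_ext)
      show "j1 \<in> PiE (nodes H) (\<lambda>_. {..<n})" "j2 \<in> PiE (nodes H) (\<lambda>_. {..<n})" using j by (auto simp: Jset_def)
      fix v assume "v \<in> nodes H"
      then have "g (j1 v) = g (j2 v)" using fun_cong[OF eq, of v] by simp
      then show "j1 v = j2 v" using ginj by (simp add: inj_eq)
    qed
  qed
  show "(\<lambda>j. restrict (g \<circ> j) (nodes H)) ` {j \<in> Jset n H. tri j H = t} \<subseteq> {j \<in> Jset n H. tri j H = tact g t}"
  proof
    fix j' assume "j' \<in> (\<lambda>j. restrict (g \<circ> j) (nodes H)) ` {j \<in> Jset n H. tri j H = t}"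
    then obtain j where j: "j \<in> Jset n H" "tri j H = t" and j': "j' = restrict (g \<circ> j) (nodes H)" by auto
    have "j' \<in> Jset n H" using j j' perm_lt[OF g] by (auto simp: Jset_def)
    moreover have "gm j' (edges H) = gm g (gm j (edges H))"
    proof -
      have "gm j' (edges H) = gm (g \<circ> j) (edges H)"
        by (rule gm_cong) (use wf j' in \<open>force simp: wf_mgraph_def\<close>)
      then show ?thesis by (simp add: gm_comp)
    qed
    moreover have "out_a H \<in> nodes H" "out_b H \<in> nodes H" using wf by (auto simp: wf_mgraph_def)
    ultimately show "j' \<in> {j \<in> Jset n H. tri j H = tact g t}"
      using j j' by (auto simp: tri_def tact_def)
  qed
qed

lemma NN_tact:
  assumes wf: "wf_mgraph H" and g: "g permutes {..<n}"
  shows "NN n H (tact g t) = NN n H t"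
proof -
  have ig: "inv g permutes {..<n}" using permutes_inv[OF g] .
  have "card {j \<in> Jset n H. tri j H = tact g t} \<le> card {j \<in> Jset n H. tri j H = tact (inv g) (tact g t)}"
    by (rule NN_tact_le[OF wf ig])
  then have "card {j \<in> Jset n H. tri j H = tact g t} \<le> card {j \<in> Jset n H. tri j H = t}"
    by (simp add: tact_inv(1)[OF g])
  moreover have "card {j \<in> Jset n H. tri j H = t} \<le> card {j \<in> Jset n H. tri j H = tact g t}"
    by (rule NN_tact_le[OF wf g])
  ultimately show ?thesis by (simp add: NN_def)
qed



lemma card_set_mset_le: "card (set_mset A) \<le> size A"
  by (induction A) (auto simp: card_insert_if)

lemma iso_edges: "mgraph_iso H H' \<Longrightarrow> \<exists>f. bij_betw f (nodes H) (nodes H') \<and>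
      gm f (edges H) = edges H' \<and> f (out_a H) = out_a H' \<and> f (out_b H) = out_b H'"
  by (simp add: mgraph_iso_def gm_def)

lemma isoI: "bij_betw f (nodes H) (nodes H') \<Longrightarrow> gm f (edges H) = edges H' \<Longrightarrow>
   f (out_a H) = out_a H' \<Longrightarrow> f (out_b H) = out_b H' \<Longrightarrow> mgraph_iso H H'"
  unfolding mgraph_iso_def gm_def by blast

lemma iso_refl: "mgraph_iso H H"
  by (rule isoI[where f="\<lambda>x. x"]) (auto simp: gm_id bij_betw_def)

lemma gm_inv_cancel:
  assumes "inj_on f S" "\<forall>e\<in>#E. fst e \<in> S \<and> snd e \<in> S"
  shows "gm (inv_into S f) (gm f E) = E"
proof -
  have "gm (inv_into S f) (gm f E) = gm (inv_into S f \<circ> f) E" by (simp add: gm_comp)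
  also have "\<dots> = gm (\<lambda>x. x) E"
    by (rule gm_cong) (use assms in \<open>force simp: inv_into_f_f\<close>)
  finally show ?thesis by (simp add: gm_id)
qed

lemma iso_sym:
  assumes wf: "wf_mgraph H" and iso: "mgraph_iso H H'"
  shows "mgraph_iso H' H"
proof -
  obtain f where f: "bij_betw f (nodes H) (nodes H')" "gm f (edges H) = edges H'"
    "f (out_a H) = out_a H'" "f (out_b H) = out_b H'" using iso_edges[OF iso] by blast
  have inj: "inj_on f (nodes H)" using f(1) bij_betw_imp_inj_on by blast
  have ab: "out_a H \<in> nodes H" "out_b H \<in> nodes H" using wf by (auto simp: wf_mgraph_def)
  show ?thesis
  proof (rule isoI[where f="inv_into (nodes H) f"])
    show "bij_betw (inv_into (nodes H) f) (nodes H') (nodes H)" using bij_betw_inv_into[OF f(1)] .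
    show "gm (inv_into (nodes H) f) (edges H') = edges H"
      using gm_inv_cancel[OF inj, of "edges H"] wf f(2) by (auto simp: wf_mgraph_def)
    show "inv_into (nodes H) f (out_a H') = out_a H"
      using f(3)[symmetric] ab inj by (simp add: inv_into_f_f)
    show "inv_into (nodes H) f (out_b H') = out_b H"
      using f(4)[symmetric] ab inj by (simp add: inv_into_f_f)
  qed
qed

lemma iso_trans:
  assumes "mgraph_iso H1 H2" "mgraph_iso H2 H3"
  shows "mgraph_iso H1 H3"
proof -
  obtain f where f: "bij_betw f (nodes H1) (nodes H2)" "gm f (edges H1) = edges H2"
    "f (out_a H1) = out_a H2" "f (out_b H1) = out_b H2" using iso_edges[OF assms(1)] by blast
  obtain g where g: "bij_betw g (nodes H2) (nodes H3)" "gm g (edges H2) = edges H3"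
    "g (out_a H2) = out_a H3" "g (out_b H2) = out_b H3" using iso_edges[OF assms(2)] by blast
  show ?thesis
    by (rule isoI[where f="g \<circ> f"]) (use f g bij_betw_trans in \<open>auto simp: gm_comp[symmetric]\<close>)
qed

lemma iso_size: "mgraph_iso H H' \<Longrightarrow> size (edges H') = size (edges H)"
  unfolding mgraph_iso_def by (metis size_image_mset)

lemma iso_card: "mgraph_iso H H' \<Longrightarrow> card (nodes H') = card (nodes H)"
  by (auto simp: mgraph_iso_def bij_betw_same_card)

lemma iso_class_eq:
  assumes "wf_mgraph H" "mgraph_iso H H'"
  shows "iso_class H = iso_class H'"
  using assms iso_sym iso_trans unfolding iso_class_def by blast

lemma NN_iso_le:
  assumes wf: "wf_mgraph H" and iso: "mgraph_iso H H'"
  shows "card {j \<in> Jset n H'. tri j H' = t} \<le> card {j \<in> Jset n H. tri j H = t}"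
proof -
  obtain f where f: "bij_betw f (nodes H) (nodes H')" "gm f (edges H) = edges H'"
    "f (out_a H) = out_a H'" "f (out_b H) = out_b H'" using iso_edges[OF iso] by blast
  have ab: "out_a H \<in> nodes H" "out_b H \<in> nodes H" using wf by (auto simp: wf_mgraph_def)
  show ?thesis
  proof (rule card_inj_on_le[where f="\<lambda>j. restrict (j \<circ> f) (nodes H)"])
    show "finite {j \<in> Jset n H. tri j H = t}"
      using finite_Jset by (rule finite_subset[rotated]) auto
    show "inj_on (\<lambda>j. restrict (j \<circ> f) (nodes H)) {j \<in> Jset n H'. tri j H' = t}"
    proof (rule inj_onI)
      fix j1 j2 assume j: "j1 \<in> {j \<in> Jset n H'. tri j H' = t}" "j2 \<in> {j \<in> Jset n H'. tri j H' = t}"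
        and eq: "restrict (j1 \<circ> f) (nodes H) = restrict (j2 \<circ> f) (nodes H)"
      show "j1 = j2"
      proof (rule PiE_ext)
        show "j1 \<in> PiE (nodes H') (\<lambda>_. {..<n})" "j2 \<in> PiE (nodes H') (\<lambda>_. {..<n})" using j by (auto simp: Jset_def)
        fix w assume "w \<in> nodes H'"
        then obtain v where "v \<in> nodes H" "w = f v" using f(1) by (auto simp: bij_betw_def)
        then show "j1 w = j2 w" using fun_cong[OF eq, of v] by simp
      qed
    qed
    show "(\<lambda>j. restrict (j \<circ> f) (nodes H)) ` {j \<in> Jset n H'. tri j H' = t} \<subseteq> {j \<in> Jset n H. tri j H = t}"
    proof
      fix j' assume "j' \<in> (\<lambda>j. restrict (j \<circ> f) (nodes H)) ` {j \<in> Jset n H'. tri j H' = t}"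
      then obtain j where j: "j \<in> Jset n H'" "tri j H' = t" and j': "j' = restrict (j \<circ> f) (nodes H)" by auto
      have fin: "f v \<in> nodes H'" if "v \<in> nodes H" for v using f(1) that by (auto simp: bij_betw_def)
      have "j' \<in> Jset n H" using j j' fin by (auto simp: Jset_def PiE_iff)
      moreover have "gm j' (edges H) = gm j (edges H')"
      proof -
        have "gm j' (edges H) = gm (j \<circ> f) (edges H)"
          by (rule gm_cong) (use wf j' in \<open>force simp: wf_mgraph_def\<close>)
        then show ?thesis by (simp add: gm_comp[symmetric] f(2))
      qed
      ultimately show "j' \<in> {j \<in> Jset n H. tri j H = t}"
        using j j' ab f(3,4) by (auto simp: tri_def)
    qed
  qed
qed

lemma NN_iso:
  assumes "wf_mgraph H" "wf_mgraph H'" "mgraph_iso H H'"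
  shows "NN n H = NN n H'"
proof
  fix t
  have "card {j \<in> Jset n H'. tri j H' = t} \<le> card {j \<in> Jset n H. tri j H = t}"
    using NN_iso_le assms by blast
  moreover have "card {j \<in> Jset n H. tri j H = t} \<le> card {j \<in> Jset n H'. tri j H' = t}"
    using NN_iso_le assms iso_sym by blast
  ultimately show "NN n H t = NN n H' t" by (simp add: NN_def)
qed

lemma iso_from_tri:
  assumes gH: "good H" and gH': "good H'" and j: "j \<in> Jset n H" "inj_on j (nodes H)"
    and j': "j' \<in> Jset n H'" and eq: "tri j H = tri j' H'" and cd: "card (nodes H') \<le> card (nodes H)"
  shows "mgraph_iso H' H"
proof -
  have wf: "wf_mgraph H" "wf_mgraph H'" using gH gH' by (auto simp: good_def)
  have S: "j ` nodes H = j' ` nodes H'" using Sp_tri[OF gH j(1)] Sp_tri[OF gH' j'] eq by simp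
  have c1: "card (j ` nodes H) = card (nodes H)" using j(2) by (simp add: card_image)
  have "card (j' ` nodes H') \<le> card (nodes H')" by (rule card_image_le) simp
  then have "card (j' ` nodes H') = card (nodes H')" using S c1 cd by simp
  then have inj': "inj_on j' (nodes H')" by (rule eq_card_imp_inj_on[rotated]) simp
  define f where "f = inv_into (nodes H) j \<circ> j'"
  have bj: "bij_betw j (nodes H) (j ` nodes H)" using j(2) by (rule inj_on_imp_bij_betw)
  have bj': "bij_betw j' (nodes H') (j ` nodes H)" using inj' S by (simp add: inj_on_imp_bij_betw)
  have ab: "out_a H \<in> nodes H" "out_b H \<in> nodes H" using wf by (auto simp: wf_mgraph_def)
  have eqs: "j (out_a H) = j' (out_a H')" "j (out_b H) = j' (out_b H')" "gm j (edges H) = gm j' (edges H')"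
    using eq by (auto simp: tri_def)
  show ?thesis
  proof (rule isoI[where f=f])
    show "bij_betw f (nodes H') (nodes H)" unfolding f_def
      by (rule bij_betw_trans[OF bj' bij_betw_inv_into[OF bj]])
    have "gm f (edges H') = gm (inv_into (nodes H) j) (gm j' (edges H'))" by (simp add: f_def gm_comp)
    also have "\<dots> = gm (inv_into (nodes H) j) (gm j (edges H))" by (simp add: eqs)
    also have "\<dots> = edges H" using gm_inv_cancel[OF j(2), of "edges H"] wf(1) by (auto simp: wf_mgraph_def)
    finally show "gm f (edges H') = edges H" .
    show "f (out_a H') = out_a H" "f (out_b H') = out_b H"
      using eqs(1,2)[symmetric] ab j(2) by (simp_all add: f_def inv_into_f_f)
  qed
qed

lemma perm_extend:
  assumes U: "finite U" and AB: "A \<subseteq> U" "B \<subseteq> U" and phi: "bij_betw \<phi> A B"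
  shows "\<exists>g. g permutes U \<and> (\<forall>x\<in>A. g x = \<phi> x)"
proof -
  have fA: "finite A" "finite B" using U AB finite_subset by auto
  have "card A = card B" using phi bij_betw_same_card by blast
  then have "card (U - A) = card (U - B)" using AB fA by (simp add: card_Diff_subset)
  then obtain \<psi> where psi: "bij_betw \<psi> (U - A) (U - B)"
    using finite_same_card_bij[of "U - A" "U - B"] U by auto
  have b: "bij_betw (\<lambda>x. if x \<in> A then \<phi> x else \<psi> x) (A \<union> (U - A)) (B \<union> (U - B))"
    by (rule bij_betw_disjoint_Un[OF phi psi]) auto
  define g where "g x = (if x \<in> U then (if x \<in> A then \<phi> x else \<psi> x) else x)" for x
  have "bij_betw g U U"
  proof -
    have "A \<union> (U - A) = U" "B \<union> (U - B) = U" using AB by auto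
    then have "bij_betw (\<lambda>x. if x \<in> A then \<phi> x else \<psi> x) U U" using b by simp
    then show ?thesis by (rule bij_betw_cong[THEN iffD1, rotated]) (simp add: g_def)
  qed
  then have "g permutes U" by (rule bij_imp_permutes) (simp add: g_def)
  moreover have "\<forall>x\<in>A. g x = \<phi> x" using AB by (auto simp: g_def)
  ultimately show ?thesis by blast
qed

lemma perm_from_tri:
  assumes gH: "good H" and j: "j \<in> Jset n H" "inj_on j (nodes H)"
    and j': "j' \<in> Jset n H" "inj_on j' (nodes H)"
  shows "\<exists>g. g permutes {..<n} \<and> tact g (tri j H) = tri j' H"
proof -
  have wf: "wf_mgraph H" using gH by (simp add: good_def)
  define \<phi> where "\<phi> = j' \<circ> inv_into (nodes H) j"
  have bj: "bij_betw j (nodes H) (j ` nodes H)" using j(2) by (rule inj_on_imp_bij_betw)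
  have bj': "bij_betw j' (nodes H) (j' ` nodes H)" using j'(2) by (rule inj_on_imp_bij_betw)
  have bphi: "bij_betw \<phi> (j ` nodes H) (j' ` nodes H)" unfolding \<phi>_def
    by (rule bij_betw_trans[OF bij_betw_inv_into[OF bj] bj'])
  have sub: "j ` nodes H \<subseteq> {..<n}" "j' ` nodes H \<subseteq> {..<n}" using j(1) j'(1) by (auto simp: Jset_def)
  obtain g where g: "g permutes {..<n}" "\<forall>x\<in>j ` nodes H. g x = \<phi> x"
    using perm_extend[OF _ sub bphi] by auto
  have gj: "g (j v) = j' v" if "v \<in> nodes H" for v
    using g(2) that j(2) by (simp add: \<phi>_def inv_into_f_f)
  have ab: "out_a H \<in> nodes H" "out_b H \<in> nodes H" using wf by (auto simp: wf_mgraph_def)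
  have "gm g (gm j (edges H)) = gm j' (edges H)"
    unfolding gm_comp by (rule gm_cong) (use wf gj in \<open>force simp: wf_mgraph_def\<close>)
  then have "tact g (tri j H) = tri j' H" using gj ab by (simp add: tact_def tri_def)
  then show ?thesis using g(1) by blast
qed

lemma exists_G:
  assumes t: "t \<in> DD n d"
  shows "\<exists>H l. admissible n d H \<and> l \<in> Jset n H \<and> inj_on l (nodes H) \<and> tri l H = t"
proof -
  obtain i k A where tt: "t = (i,k,A)" "i < n" "k < n" "A \<in> Ms n d" using t by (auto simp: DD_def)
  define S where "S = Sp t"
  have finS: "finite S" by (simp add: S_def Sp_def)
  define m where "m = card S"
  obtain l0 where l0: "bij_betw l0 {1..m} S" using finite_same_card_bij[of "{1..m}" S] finS by (auto simp: m_def)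
  define lam where "lam = inv_into {1..m} l0"
  have blam: "bij_betw lam S {1..m}" unfolding lam_def by (rule bij_betw_inv_into[OF l0])
  have lam_in: "lam x \<in> {1..m}" if "x \<in> S" for x using blam that by (auto simp: bij_betw_def)
  have l0lam: "l0 (lam x) = x" if "x \<in> S" for x using l0 that unfolding lam_def by (meson bij_betw_inv_into_right)
  have laml0: "lam (l0 v) = v" if "v \<in> {1..m}" for v using l0 that unfolding lam_def by (meson bij_betw_inv_into_left)
  have l0in: "l0 v \<in> S" if "v \<in> {1..m}" for v using l0 that by (auto simp: bij_betw_def)
  define H :: mgraph where "H = (m, gm lam A, lam i, lam k)"
  have nH: "nodes H = {1..m}" by (simp add: H_def nodes_def)
  have eH: "edges H = gm lam A" "out_a H = lam i" "out_b H = lam k" by (simp_all add: H_def edges_def out_a_def out_b_def)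
  have ikS: "i \<in> S" "k \<in> S" by (auto simp: S_def Sp_def tt)
  have AS: "fst e \<in> S \<and> snd e \<in> S" if "e \<in># A" for e using that by (auto simp: S_def Sp_def tt)
  have Sn: "S \<subseteq> {..<n}" using tt by (auto simp: S_def Sp_def Ms_def)
  have wf: "wf_mgraph H"
    unfolding wf_mgraph_def nH eH using ikS lam_in AS by (auto simp: gm_def)
  have cardn: "card (nodes H) \<le> n" using card_mono[OF _ Sn] by (simp add: nH m_def)
  have cardd: "card (nodes H) \<le> 2 + 2 * d"
  proof -
    have SS: "S = {i,k} \<union> fst ` set_mset A \<union> snd ` set_mset A" by (simp add: S_def Sp_def tt)
    have "card S \<le> card {i,k} + card (fst ` set_mset A) + card (snd ` set_mset A)"
      unfolding SS using card_Un_le[of "{i,k} \<union> fst ` set_mset A" "snd ` set_mset A"]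
        card_Un_le[of "{i,k}" "fst ` set_mset A"] by linarith
    also have "\<dots> \<le> 2 + size A + size A"
      using card_image_le[of "set_mset A" fst] card_image_le[of "set_mset A" snd] card_set_mset_le[of A]
        card_insert_le_m1 by (auto simp: card_insert_if)
    also have "\<dots> \<le> 2 + 2 * d" using tt by (simp add: Ms_def)
    finally show ?thesis by (simp add: nH m_def)
  qed
  have noiso: "\<forall>v\<in>nodes H - {out_a H, out_b H}. \<not> isolated H v"
  proof
    fix v assume v: "v \<in> nodes H - {out_a H, out_b H}"
    then have v1: "v \<in> {1..m}" by (simp add: nH)
    have "l0 v \<noteq> i" "l0 v \<noteq> k" using v laml0[OF v1] by (auto simp: eH)
    then have "l0 v \<in> fst ` set_mset A \<union> snd ` set_mset A" using l0in[OF v1] by (auto simp: S_def Sp_def tt)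
    then obtain e where e: "e \<in># A" "fst e = l0 v \<or> snd e = l0 v" by auto
    have "map_prod lam lam e \<in># edges H" using e by (simp add: eH gm_def)
    moreover have "fst (map_prod lam lam e) = v \<or> snd (map_prod lam lam e) = v"
      using e laml0[OF v1] by (cases e) auto
    ultimately show "\<not> isolated H v" unfolding isolated_def by blast
  qed
  have adm: "admissible n d H"
    using wf cardn cardd noiso tt by (simp add: admissible_def eH gm_def Ms_def)
  define l where "l = restrict l0 {1..m}"
  have l0n: "l0 v < n" if "v \<in> {1..m}" for v using l0in[OF that] Sn by auto
  have lJ: "l \<in> Jset n H" unfolding l_def Jset_def nH using l0n by (simp add: PiE_iff)
  have inj0: "inj_on l0 {1..m}" using l0 by (simp add: bij_betw_def)
  have linj: "inj_on l (nodes H)" using inj_on_cong[of "{1..m}" l l0] inj0 by (simp add: l_def nH)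
  have "gm l (gm lam A) = A"
  proof -
    have "gm l (gm lam A) = gm (\<lambda>x. x) A" unfolding gm_comp
    proof (rule gm_cong)
      have ll: "(l \<circ> lam) x = x" if "x \<in> S" for x using lam_in[OF that] l0lam[OF that] by (simp add: l_def)
      fix x assume "x \<in> fst ` set_mset A \<union> snd ` set_mset A"
      then have "x \<in> S" using AS by auto
      then show "(l \<circ> lam) x = x" by (rule ll)
    qed
    then show ?thesis by (simp add: gm_id)
  qed
  then have "tri l H = t" using ikS lam_in l0lam by (simp add: tri_def eH tt l_def)
  then show ?thesis using adm lJ linj by blast
qed



definition orb :: "nat \<Rightarrow> triple \<Rightarrow> triple set" where
  "orb n t = (\<lambda>g. tact g t) ` {g. g permutes {..<n}}"

lemma finite_orb: "finite (orb n t)"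
  unfolding orb_def by (rule finite_imageI) (simp add: finite_permutations)

lemma tact_id: "tact (\<lambda>x. x) t = t"
  by (simp add: tact_def gm_id)

lemma orb_self: "t \<in> orb n t"
proof -
  have "(\<lambda>x. x) permutes {..<n}" using permutes_id[unfolded id_def] .
  then show ?thesis unfolding orb_def by (intro image_eqI[where x="\<lambda>x. x"]) (simp_all add: tact_id)
qed

lemma orb_sym: "t' \<in> orb n t \<Longrightarrow> t \<in> orb n t'"
proof -
  assume "t' \<in> orb n t"
  then obtain g where g: "g permutes {..<n}" "t' = tact g t" by (auto simp: orb_def)
  then have "tact (inv g) t' = t" using tact_inv(1)[OF g(1)] by simp
  moreover have "inv g permutes {..<n}" using permutes_inv[OF g(1)] .
  ultimately show "t \<in> orb n t'" unfolding orb_def by force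
qed

lemma orb_sub: "t' \<in> orb n t \<Longrightarrow> orb n t' \<subseteq> orb n t"
proof
  fix s assume "t' \<in> orb n t" "s \<in> orb n t'"
  then obtain g h where g: "g permutes {..<n}" "t' = tact g t" and h: "h permutes {..<n}" "s = tact h t'"
    by (auto simp: orb_def)
  then have "s = tact (h \<circ> g) t" by (simp add: tact_comp)
  moreover have "h \<circ> g permutes {..<n}" using permutes_compose[OF g(1) h(1)] .
  ultimately show "s \<in> orb n t" unfolding orb_def by blast
qed

lemma orb_eq: "t' \<in> orb n t \<Longrightarrow> orb n t' = orb n t"
  using orb_sub orb_sym by blast

lemma Sp_tact: "Sp (tact g t) = g ` Sp t"
  by (auto simp: Sp_def tact_def set_gm image_Un image_image)

lemma card_Sp_tact: "g permutes S \<Longrightarrow> card (Sp (tact g t)) = card (Sp t)"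
proof -
  assume p: "g permutes S"
  have "inj_on g (Sp t)" using permutes_inj[OF p] by (rule inj_on_subset) simp
  then show ?thesis by (simp add: Sp_tact card_image)
qed

lemma finite_Sp: "finite (Sp t)" by (simp add: Sp_def)

lemma orb_DD: "t \<in> DD n d \<Longrightarrow> orb n t \<subseteq> DD n d"
  by (auto simp: orb_def tact_DD)

lemma NN_nonzero: "NN n H t \<noteq> 0 \<Longrightarrow> \<exists>j. j \<in> Jset n H \<and> tri j H = t"
  unfolding NN_def by (metis (mono_tags, lifting) card.empty empty_Collect_eq of_nat_0)

lemma NN_pos: "l \<in> Jset n H \<Longrightarrow> tri l H = t \<Longrightarrow> NN n H t > 0"
proof -
  assume "l \<in> Jset n H" "tri l H = t"
  moreover have "finite {j \<in> Jset n H. tri j H = t}" using finite_Jset by (rule finite_subset[rotated]) auto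
  ultimately have "card {j \<in> Jset n H. tri j H = t} > 0" by (auto simp: card_gt_0_iff)
  then show ?thesis by (simp add: NN_def)
qed

lemma NN_zero_big: "good H \<Longrightarrow> NN n H t \<noteq> 0 \<Longrightarrow> card (Sp t) \<le> card (nodes H)"
  using NN_nonzero Sp_tri card_image_le finite_nodes by metis

lemma NN_orb:
  assumes gH: "good H" and l: "l \<in> Jset n H" "inj_on l (nodes H)" "tri l H = t"
    and nz: "NN n H t' \<noteq> 0" and cd: "card (nodes H) \<le> card (Sp t')"
  shows "t' \<in> orb n t"
proof -
  obtain j where j: "j \<in> Jset n H" "tri j H = t'" using NN_nonzero[OF nz] by blast
  have "card (j ` nodes H) = card (Sp t')" using Sp_tri[OF gH j(1)] j(2) by simp
  then have "card (j ` nodes H) = card (nodes H)" using cd card_image_le[of "nodes H" j] by simp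
  then have "inj_on j (nodes H)" by (rule eq_card_imp_inj_on[rotated]) simp
  from perm_from_tri[OF gH l(1,2) j(1) this] obtain g where "g permutes {..<n}" "tact g (tri l H) = tri j H"
    by blast
  then show ?thesis using l(3) j(2) unfolding orb_def by (intro image_eqI[where x=g]) auto
qed

definition hr :: "nat \<Rightarrow> nat \<Rightarrow> mgraph set \<Rightarrow> mgraph" where
  "hr n d C = (SOME H. admissible n d H \<and> C = iso_class H)"

lemma hr: "C \<in> Bclasses n d \<Longrightarrow> admissible n d (hr n d C) \<and> C = iso_class (hr n d C)"
  unfolding hr_def Bclasses_def by (rule someI_ex) blast

lemma adm_good: "admissible n d H \<Longrightarrow> good H"
  by (simp add: admissible_def good_def)

lemma adm_wf: "admissible n d H \<Longrightarrow> wf_mgraph H"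
  by (simp add: admissible_def)

lemma in_iso_class: "wf_mgraph H \<Longrightarrow> H \<in> iso_class H"
  by (simp add: iso_class_def iso_refl)

lemma NN_class:
  assumes "admissible n d H" "admissible n d H1" "iso_class H1 = iso_class H"
  shows "NN n H1 = NN n H"
proof -
  have "H \<in> iso_class H1" using assms in_iso_class adm_wf by blast
  then have "mgraph_iso H1 H" by (simp add: iso_class_def)
  then show ?thesis using NN_iso assms adm_wf by blast
qed

definition insp :: "nat \<Rightarrow> nat \<Rightarrow> (triple \<Rightarrow> real) \<Rightarrow> bool" where
  "insp n d f \<longleftrightarrow> (\<exists>c. \<forall>t\<in>DD n d. f t = (\<Sum>C\<in>Bclasses n d. c C * NN n (hr n d C) t))"

lemma insp_zero: "insp n d (\<lambda>_. 0)"
  unfolding insp_def by (rule exI[of _ "\<lambda>_. 0"]) simp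

lemma insp_add: "insp n d f \<Longrightarrow> insp n d h \<Longrightarrow> insp n d (\<lambda>t. f t + h t)"
  unfolding insp_def
proof (elim exE)
  fix c1 c2 assume c1: "\<forall>t\<in>DD n d. f t = (\<Sum>C\<in>Bclasses n d. c1 C * NN n (hr n d C) t)"
    and c2: "\<forall>t\<in>DD n d. h t = (\<Sum>C\<in>Bclasses n d. c2 C * NN n (hr n d C) t)"
  show "\<exists>c. \<forall>t\<in>DD n d. f t + h t = (\<Sum>C\<in>Bclasses n d. c C * NN n (hr n d C) t)"
    by (rule exI[of _ "\<lambda>C. c1 C + c2 C"]) (simp add: c1 c2 distrib_right sum.distrib)
qed

lemma insp_scale: "insp n d f \<Longrightarrow> insp n d (\<lambda>t. a * f t)"
  unfolding insp_def
proof (elim exE)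
  fix c1 assume c1: "\<forall>t\<in>DD n d. f t = (\<Sum>C\<in>Bclasses n d. c1 C * NN n (hr n d C) t)"
  show "\<exists>c. \<forall>t\<in>DD n d. a * f t = (\<Sum>C\<in>Bclasses n d. c C * NN n (hr n d C) t)"
    by (rule exI[of _ "\<lambda>C. a * c1 C"]) (simp add: c1 sum_distrib_left mult.assoc)
qed

lemma insp_cong: "insp n d f \<Longrightarrow> (\<forall>t\<in>DD n d. f t = h t) \<Longrightarrow> insp n d h"
  unfolding insp_def by auto

lemma insp_sum: "finite S \<Longrightarrow> (\<forall>x\<in>S. insp n d (F x)) \<Longrightarrow> insp n d (\<lambda>t. \<Sum>x\<in>S. F x t)"
proof (induction S rule: finite_induct)
  case empty then show ?case by (simp add: insp_zero)
next
  case (insert x S)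
  then show ?case using insp_add[of n d "F x" "\<lambda>t. \<Sum>x\<in>S. F x t"] by simp
qed

lemma finite_adm: "finite {H. admissible n d H}"
proof -
  have "{H. admissible n d H} \<subseteq> {..n} \<times> {A. set_mset A \<subseteq> {..n} \<times> {..n} \<and> size A \<le> d} \<times> {..n} \<times> {..n}"
  proof
    fix H assume "H \<in> {H. admissible n d H}"
    then have a: "admissible n d H" by simp
    obtain m E a b where H: "H = (m, E, a, b)" by (cases H) auto
    have "m \<le> n" using a by (simp add: admissible_def H nodes_def)
    moreover have "a \<in> {1..m}" "b \<in> {1..m}" "\<forall>e\<in>#E. fst e \<in> {1..m} \<and> snd e \<in> {1..m}"
      using a by (auto simp: admissible_def wf_mgraph_def H nodes_def edges_def out_a_def out_b_def)
    moreover have "size E \<le> d" using a by (simp add: admissible_def H edges_def)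
    ultimately show "H \<in> {..n} \<times> {A. set_mset A \<subseteq> {..n} \<times> {..n} \<and> size A \<le> d} \<times> {..n} \<times> {..n}"
      by (force simp: H)
  qed
  moreover have "finite ({..n} \<times> {A. set_mset A \<subseteq> {..n} \<times> {..n} \<and> size A \<le> d} \<times> {..n} \<times> {..n})"
    using finite_msets_bounded[of "{..n} \<times> {..n}" d] by simp
  ultimately show ?thesis using finite_subset by blast
qed

lemma finite_Bclasses: "finite (Bclasses n d)"
  unfolding Bclasses_def using finite_adm by simp

lemma insp_NN: "admissible n d H \<Longrightarrow> insp n d (NN n H)"
proof -
  assume a: "admissible n d H"
  have B: "iso_class H \<in> Bclasses n d" using a by (simp add: Bclasses_def)
  show ?thesis unfolding insp_def
  proof (rule exI[of _ "\<lambda>C. if C = iso_class H then 1 else 0"], intro ballI)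
    fix t
    have "(\<Sum>C\<in>Bclasses n d. (if C = iso_class H then 1 else 0) * NN n (hr n d C) t) = NN n (hr n d (iso_class H)) t"
    proof -
      have "(\<Sum>C\<in>Bclasses n d. (if C = iso_class H then 1 else 0) * NN n (hr n d C) t) =
            (\<Sum>C\<in>Bclasses n d. if C = iso_class H then NN n (hr n d C) t else 0)"
        by (rule sum.cong) auto
      then show ?thesis using B finite_Bclasses[of n d] by (simp only: sum.delta) simp
    qed
    also have "\<dots> = NN n H t" using hr[OF B] NN_class a by metis
    finally show "NN n H t = (\<Sum>C\<in>Bclasses n d. (if C = iso_class H then 1 else 0) * NN n (hr n d C) t)" by simp
  qed
qed



definition GG :: "nat \<Rightarrow> nat \<Rightarrow> triple \<Rightarrow> mgraph" where
  "GG n d t = (SOME H. \<exists>l. admissible n d H \<and> l \<in> Jset n H \<and> inj_on l (nodes H) \<and> tri l H = t)"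

lemma GG: "t \<in> DD n d \<Longrightarrow> \<exists>l. admissible n d (GG n d t) \<and> l \<in> Jset n (GG n d t) \<and>
    inj_on l (nodes (GG n d t)) \<and> tri l (GG n d t) = t"
  unfolding GG_def by (rule someI_ex) (use exists_G in blast)

lemma GG_card: "t \<in> DD n d \<Longrightarrow> card (nodes (GG n d t)) = card (Sp t)"
proof -
  assume t: "t \<in> DD n d"
  from GG[OF t] obtain l where l: "admissible n d (GG n d t)" "l \<in> Jset n (GG n d t)"
    "inj_on l (nodes (GG n d t))" "tri l (GG n d t) = t" by blast
  have "Sp t = l ` nodes (GG n d t)" using Sp_tri[OF adm_good[OF l(1)] l(2)] l(4) by simp
  then show ?thesis using l(3) by (simp add: card_image)
qed

lemma span_ind:
  "(\<forall>g. g permutes {..<n} \<longrightarrow> (\<forall>t\<in>DD n d. f (tact g t) = f t)) \<Longrightarrow>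
   (\<forall>t\<in>DD n d. f t \<noteq> 0 \<longrightarrow> card (Sp t) \<le> m) \<Longrightarrow> insp n d f"
proof (induction m arbitrary: f)
  case 0
  have "\<forall>t\<in>DD n d. (\<lambda>_. 0) t = f t"
  proof
    fix t assume t: "t \<in> DD n d"
    have "fst t \<in> Sp t" by (simp add: Sp_def)
    then have "card (Sp t) \<noteq> 0" using finite_Sp by (metis card_0_eq empty_iff)
    then show "(\<lambda>_. 0) t = f t" using 0(2) t by auto
  qed
  then show ?case using insp_cong[OF insp_zero] by blast
next
  case (Suc m)
  define Dm where "Dm = {t\<in>DD n d. card (Sp t) = Suc m}"
  define w where "w t = f t / (real (card (orb n t)) * NN n (GG n d t) t)" for t
  define h where "h t' = f t' - (\<Sum>t\<in>Dm. w t * NN n (GG n d t) t')" for t'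
  have finDm: "finite Dm" using finite_DD[of n d] by (simp add: Dm_def)
  have DmDD: "t \<in> DD n d" if "t \<in> Dm" for t using that by (simp add: Dm_def)
  have admG: "admissible n d (GG n d t)" if "t \<in> Dm" for t using GG[OF DmDD[OF that]] by blast
  have hinv: "\<forall>g. g permutes {..<n} \<longrightarrow> (\<forall>t\<in>DD n d. h (tact g t) = h t)"
  proof (intro allI impI ballI)
    fix g t' assume g: "g permutes {..<n}" and t': "t' \<in> DD n d"
    have "NN n (GG n d t) (tact g t') = NN n (GG n d t) t'" if "t \<in> Dm" for t
      using NN_tact[OF adm_wf[OF admG[OF that]] g] .
    then show "h (tact g t') = h t'" using Suc.prems(1) g t' by (simp add: h_def)
  qed
  have hsupp: "\<forall>t'\<in>DD n d. h t' \<noteq> 0 \<longrightarrow> card (Sp t') \<le> m"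
  proof (intro ballI impI)
    fix t' assume t': "t' \<in> DD n d" and hne: "h t' \<noteq> 0"
    show "card (Sp t') \<le> m"
    proof (rule ccontr)
      assume "\<not> card (Sp t') \<le> m"
      then have ge: "Suc m \<le> card (Sp t')" by simp
      show False
      proof (cases "card (Sp t') = Suc m")
        case False
        then have big: "Suc m < card (Sp t')" using ge by simp
        then have "f t' = 0" using Suc.prems(2) t' by force
        moreover have "NN n (GG n d t) t' = 0" if "t \<in> Dm" for t
        proof (rule ccontr)
          assume "NN n (GG n d t) t' \<noteq> 0"
          then have "card (Sp t') \<le> card (nodes (GG n d t))" by (rule NN_zero_big[OF adm_good[OF admG[OF that]]])
          then show False using GG_card[OF DmDD[OF that]] that big by (simp add: Dm_def)
        qed
        ultimately have "h t' = 0" by (simp add: h_def)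
        then show False using hne by simp
      next
        case True
        then have t'Dm: "t' \<in> Dm" using t' by (simp add: Dm_def)
        have orbsub: "orb n t' \<subseteq> Dm"
        proof
          fix s assume s: "s \<in> orb n t'"
          then obtain g where g: "g permutes {..<n}" "s = tact g t'" by (auto simp: orb_def)
          have "s \<in> DD n d" using orb_DD[OF t'] s by blast
          moreover have "card (Sp s) = Suc m" using card_Sp_tact[OF g(1)] g(2) True by simp
          ultimately show "s \<in> Dm" by (simp add: Dm_def)
        qed
        have zero_out: "w t * NN n (GG n d t) t' = 0" if "t \<in> Dm - orb n t'" for t
        proof -
          have tDm: "t \<in> Dm" using that by simp
          obtain l where l: "admissible n d (GG n d t)" "l \<in> Jset n (GG n d t)"
            "inj_on l (nodes (GG n d t))" "tri l (GG n d t) = t" using GG[OF DmDD[OF tDm]] by blast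
          have "NN n (GG n d t) t' = 0"
          proof (rule ccontr)
            assume nz: "NN n (GG n d t) t' \<noteq> 0"
            have "card (nodes (GG n d t)) \<le> card (Sp t')"
              using GG_card[OF DmDD[OF tDm]] tDm True by (simp add: Dm_def)
            from NN_orb[OF adm_good[OF l(1)] l(2,3,4) nz this] have "t' \<in> orb n t" .
            then have "t \<in> orb n t'" by (rule orb_sym)
            then show False using that by simp
          qed
          then show ?thesis by simp
        qed
        have in_orb: "w t * NN n (GG n d t) t' = f t' / real (card (orb n t'))" if "t \<in> orb n t'" for t
        proof -
          have tDm: "t \<in> Dm" using that orbsub by blast
          obtain l where l: "admissible n d (GG n d t)" "l \<in> Jset n (GG n d t)"
            "inj_on l (nodes (GG n d t))" "tri l (GG n d t) = t" using GG[OF DmDD[OF tDm]] by blast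
          have "t' \<in> orb n t" using orb_sym[OF that] .
          then obtain g where g: "g permutes {..<n}" "t' = tact g t" by (auto simp: orb_def)
          have nn: "NN n (GG n d t) t' = NN n (GG n d t) t" using NN_tact[OF adm_wf[OF l(1)] g(1)] g(2) by simp
          have ff: "f t' = f t" using Suc.prems(1) g DmDD[OF tDm] by simp
          have oo: "orb n t = orb n t'" using orb_eq[OF that] .
          have pos: "NN n (GG n d t) t > 0" using NN_pos[OF l(2,4)] .
          show ?thesis using pos by (simp add: w_def nn ff oo)
        qed
        have "(\<Sum>t\<in>Dm. w t * NN n (GG n d t) t') = (\<Sum>t\<in>orb n t'. w t * NN n (GG n d t) t')"
          by (rule sum.mono_neutral_right[OF finDm orbsub]) (use zero_out in blast)
        also have "\<dots> = (\<Sum>t\<in>orb n t'. f t' / real (card (orb n t')))"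
          by (rule sum.cong) (simp_all add: in_orb)
        also have "\<dots> = f t'"
        proof -
          have "card (orb n t') > 0" using finite_orb orb_self by (metis card_gt_0_iff empty_iff)
          then show ?thesis by simp
        qed
        finally have "h t' = 0" by (simp add: h_def)
        then show False using hne by simp
      qed
    qed
  qed
  have ih: "insp n d h" using Suc.IH[OF hinv hsupp] .
  have "insp n d (\<lambda>t'. \<Sum>t\<in>Dm. w t * NN n (GG n d t) t')"
    by (rule insp_sum[OF finDm]) (use admG insp_scale insp_NN in blast)
  from insp_add[OF ih this] show ?case by (rule insp_cong) (simp add: h_def)
qed

lemma PC_eq:
  assumes a: "admissible n d H0"
  shows "PC n (iso_class H0) = Fm n d (NN n H0)"
proof -
  define R where "R = (SOME H. H \<in> iso_class H0)"
  have R: "R \<in> iso_class H0" unfolding R_def by (rule someI[of _ H0]) (rule in_iso_class[OF adm_wf[OF a]])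
  then have wfR: "wf_mgraph R" and iso: "mgraph_iso H0 R" by (auto simp: iso_class_def)
  have sz: "size (edges R) \<le> d" using iso_size[OF iso] a by (simp add: admissible_def)
  have "PC n (iso_class H0) = PH n R" by (simp add: PC_def R_def)
  also have "\<dots> = Fm n d (NN n R)" by (rule PH_Fm[OF wfR sz])
  also have "NN n R = NN n H0" using NN_iso[OF adm_wf[OF a] wfR iso] by simp
  finally show ?thesis .
qed

lemma PC_hr: "C \<in> Bclasses n d \<Longrightarrow> PC n C = Fm n d (NN n (hr n d C))"
  using hr PC_eq by metis

lemma sum_count_size:
  assumes "A \<in> Ms n d"
  shows "(\<Sum>p\<in>{..<n} \<times> {..<n}. count A p) = size A"
proof -
  have "(\<Sum>p\<in>{..<n} \<times> {..<n}. count A p) = (\<Sum>p\<in>set_mset A. count A p)"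
    by (rule sum.mono_neutral_right) (use assms in \<open>auto simp: Ms_def not_in_iff\<close>)
  then show ?thesis by (simp add: size_multiset_overloaded_eq)
qed

lemma mono_mm:
  assumes "A \<in> Ms n d"
  shows "mono n (count A) X = mm X A"
proof -
  have "mm X A = (\<Prod>p\<in>set_mset A. (\<lambda>(r,s). X r s) p ^ count A p)"
    by (simp add: mm_def image_prod_mset_multiplicity)
  also have "\<dots> = (\<Prod>p\<in>{..<n} \<times> {..<n}. (\<lambda>(r,s). X r s) p ^ count A p)"
    by (rule prod.mono_neutral_left) (use assms in \<open>auto simp: Ms_def not_in_iff\<close>)
  finally show ?thesis by (simp add: mono_def split_def)
qed

lemma conv:
  "(\<Sum>\<alpha>\<in>monomial_exps n d. c \<alpha> * mono n \<alpha> X) = (\<Sum>A\<in>Ms n d. c (count A) * mm X A)"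
proof (rule sum.reindex_bij_witness[where i=count and j=Abs_multiset])
  fix \<alpha> assume a: "\<alpha> \<in> monomial_exps n d"
  have out: "\<alpha> x = 0" if "x \<notin> {..<n} \<times> {..<n}" for x using a that unfolding monomial_exps_def by blast
  have fin: "finite {x. 0 < \<alpha> x}"
  proof -
    have "{x. 0 < \<alpha> x} \<subseteq> {..<n} \<times> {..<n}" using out by (metis (mono_tags) less_irrefl mem_Collect_eq subsetI)
    then show ?thesis by (rule finite_subset) simp
  qed
  show ca: "count (Abs_multiset \<alpha>) = \<alpha>" by (rule count_Abs_multiset[OF fin])
  have sub: "set_mset (Abs_multiset \<alpha>) \<subseteq> {..<n} \<times> {..<n}"
  proof
    fix x assume "x \<in># Abs_multiset \<alpha>"
    then have "\<alpha> x > 0" using ca by (metis count_greater_zero_iff)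
    show "x \<in> {..<n} \<times> {..<n}"
    proof (rule ccontr)
      assume "x \<notin> {..<n} \<times> {..<n}"
      then have "\<alpha> x = 0" by (rule out)
      then show False using \<open>\<alpha> x > 0\<close> by simp
    qed
  qed
  have "size (Abs_multiset \<alpha>) = (\<Sum>p\<in>{..<n} \<times> {..<n}. \<alpha> p)"
  proof -
    have "size (Abs_multiset \<alpha>) = (\<Sum>p\<in>set_mset (Abs_multiset \<alpha>). \<alpha> p)"
      by (simp add: size_multiset_overloaded_eq ca)
    also have "\<dots> = (\<Sum>p\<in>{..<n} \<times> {..<n}. \<alpha> p)"
      by (rule sum.mono_neutral_left) (use sub ca in \<open>auto simp: count_eq_zero_iff[symmetric]\<close>)
    finally show ?thesis .
  qed
  then show am: "Abs_multiset \<alpha> \<in> Ms n d" using sub a by (simp add: Ms_def monomial_exps_def)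
  show "c (count (Abs_multiset \<alpha>)) * mm X (Abs_multiset \<alpha>) = c \<alpha> * mono n \<alpha> X"
    using mono_mm[OF am, of X] ca by simp
next
  fix A assume A: "A \<in> Ms n d"
  show "Abs_multiset (count A) = A" by (simp add: count_inverse)
  show "count A \<in> monomial_exps n d"
    using A sum_count_size[OF A] by (auto simp: monomial_exps_def Ms_def count_eq_zero_iff)
qed



lemma part2:
  assumes C: "C \<in> Bclasses n d"
  shows "poly_map n d (PC n C) \<and> equivariant n (PC n C)"
proof -
  obtain H0 where a: "admissible n d H0" and CH: "C = iso_class H0" using C by (auto simp: Bclasses_def)
  have P: "PC n C = Fm n d (NN n H0)" using PC_eq[OF a] CH by simp
  have pm: "poly_map n d (Fm n d (NN n H0))"
    unfolding poly_map_def
  proof (intro conjI allI impI)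
    fix X i k assume "\<not> (i < n \<and> k < n)"
    then show "Fm n d (NN n H0) X i k = 0" by (auto simp: Fm_def)
  next
    fix i k assume ik: "i < n" "k < n"
    show "\<exists>c. \<forall>X. Fm n d (NN n H0) X i k = (\<Sum>\<alpha>\<in>monomial_exps n d. c \<alpha> * mono n \<alpha> X)"
    proof (rule exI[of _ "\<lambda>\<alpha>. NN n H0 (i, k, Abs_multiset \<alpha>)"], intro allI)
      fix X
      show "Fm n d (NN n H0) X i k = (\<Sum>\<alpha>\<in>monomial_exps n d. NN n H0 (i, k, Abs_multiset \<alpha>) * mono n \<alpha> X)"
        unfolding conv using ik by (simp add: Fm_def count_inverse)
    qed
  qed
  have eq: "equivariant n (Fm n d (NN n H0))"
    by (rule Fm_equivariant) (use NN_tact[OF adm_wf[OF a]] in blast)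
  show ?thesis using pm eq P by simp
qed

lemma part3:
  assumes z: "\<forall>X i k. (\<Sum>C \<in> Bclasses n d. c C * PC n C X i k) = 0"
  shows "\<forall>C \<in> Bclasses n d. c C = 0"
proof (rule ccontr)
  assume "\<not> (\<forall>C \<in> Bclasses n d. c C = 0)"
  define S where "S = {C \<in> Bclasses n d. c C \<noteq> 0}"
  have Sne: "S \<noteq> {}" and finS: "finite S" using \<open>\<not> _\<close> finite_Bclasses[of n d] by (auto simp: S_def)
  define M where "M = Max ((\<lambda>C. card (nodes (hr n d C))) ` S)"
  have "M \<in> (\<lambda>C. card (nodes (hr n d C))) ` S"
    unfolding M_def by (rule Max_in) (use finS Sne in auto)
  then obtain C0 where C0: "C0 \<in> S" "card (nodes (hr n d C0)) = M" by auto
  have Mge: "card (nodes (hr n d C)) \<le> M" if "C \<in> S" for C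
    using Max_ge[of "(\<lambda>C. card (nodes (hr n d C))) ` S"] finS that by (auto simp: M_def)
  have C0B: "C0 \<in> Bclasses n d" using C0 by (simp add: S_def)
  define H where "H = hr n d C0"
  have aH: "admissible n d H" and C0H: "C0 = iso_class H" using hr[OF C0B] by (auto simp: H_def)
  have sum0: "\<forall>t\<in>DD n d. (\<Sum>C\<in>Bclasses n d. c C * NN n (hr n d C) t) = 0"
  proof -
    have "Fm n d (\<lambda>t. \<Sum>C\<in>Bclasses n d. c C * NN n (hr n d C) t) X i k = Fm n d (\<lambda>_. 0) X i k" for X i k
    proof -
      have "Fm n d (\<lambda>t. \<Sum>C\<in>Bclasses n d. c C * NN n (hr n d C) t) X i k =
            (\<Sum>C\<in>Bclasses n d. c C * Fm n d (NN n (hr n d C)) X i k)"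
        by (rule Fm_lin[symmetric, OF finite_Bclasses])
      also have "\<dots> = (\<Sum>C\<in>Bclasses n d. c C * PC n C X i k)"
        by (rule sum.cong) (simp_all add: PC_hr)
      also have "\<dots> = 0" using z by simp
      finally show ?thesis by (simp add: Fm_def)
    qed
    from Fm_unique[OF this] show ?thesis by simp
  qed
  define m where "m = fst H"
  have nH: "nodes H = {1..m}" by (simp add: nodes_def m_def)
  have mn: "m \<le> n" using aH by (simp add: admissible_def card_nodes m_def)
  define j0 where "j0 = restrict (\<lambda>v. v - 1) (nodes H)"
  have j0J: "j0 \<in> Jset n H" using mn by (auto simp: j0_def Jset_def nH)
  have j0inj: "inj_on j0 (nodes H)" by (auto simp: j0_def nH inj_on_def)
  define t where "t = tri j0 H"
  have tD: "t \<in> DD n d" unfolding t_def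
    by (rule tri_DD[OF adm_wf[OF aH] _ j0J]) (use aH in \<open>simp add: admissible_def\<close>)
  have others: "c C * NN n (hr n d C) t = 0" if "C \<in> Bclasses n d" "C \<noteq> C0" for C
  proof (rule ccontr)
    assume ne: "c C * NN n (hr n d C) t \<noteq> 0"
    then have CS: "C \<in> S" using that by (simp add: S_def)
    have aC: "admissible n d (hr n d C)" and CC: "C = iso_class (hr n d C)" using hr[OF that(1)] by auto
    from ne have "NN n (hr n d C) t \<noteq> 0" by simp
    then obtain j' where j': "j' \<in> Jset n (hr n d C)" "tri j' (hr n d C) = t" using NN_nonzero by blast
    have "card (nodes (hr n d C)) \<le> card (nodes H)" using Mge[OF CS] C0(2) by (simp add: H_def)
    then have "mgraph_iso (hr n d C) H"
      using iso_from_tri[OF adm_good[OF aH] adm_good[OF aC] j0J j0inj j'(1)] j'(2) by (simp add: t_def)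
    then have "iso_class (hr n d C) = iso_class H" by (rule iso_class_eq[OF adm_wf[OF aC]])
    then show False using CC C0H that(2) by simp
  qed
  have "(\<Sum>C\<in>Bclasses n d. c C * NN n (hr n d C) t) =
      c C0 * NN n (hr n d C0) t + (\<Sum>C\<in>Bclasses n d - {C0}. c C * NN n (hr n d C) t)"
    by (rule sum.remove[OF finite_Bclasses C0B])
  also have "(\<Sum>C\<in>Bclasses n d - {C0}. c C * NN n (hr n d C) t) = 0"
    by (rule sum.neutral) (use others in auto)
  finally have "(\<Sum>C\<in>Bclasses n d. c C * NN n (hr n d C) t) = c C0 * NN n (hr n d C0) t" by simp
  moreover have "NN n H t > 0" using NN_pos[OF j0J] by (simp add: t_def)
  moreover have "c C0 \<noteq> 0" using C0 by (simp add: S_def)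
  ultimately show False using sum0 tD by (simp add: H_def)
qed

lemma part4:
  assumes P: "poly_map n d P" "equivariant n P"
  shows "\<exists>c :: mgraph set \<Rightarrow> real. \<forall>X i k. P X i k = (\<Sum>C \<in> Bclasses n d. c C * PC n C X i k)"
proof -
  define cf where "cf i k = (SOME c. \<forall>X. P X i k = (\<Sum>\<alpha>\<in>monomial_exps n d. c \<alpha> * mono n \<alpha> X))" for i k
  define f where "f t = cf (fst t) (fst (snd t)) (count (snd (snd t)))" for t :: triple
  have PF: "P = Fm n d f"
  proof (intro ext)
    fix X i k
    show "P X i k = Fm n d f X i k"
    proof (cases "i < n \<and> k < n")
      case False then show ?thesis using P(1) unfolding poly_map_def Fm_def by auto
    next
      case True
      then have "\<exists>c. \<forall>X. P X i k = (\<Sum>\<alpha>\<in>monomial_exps n d. c \<alpha> * mono n \<alpha> X)"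
        using P(1) by (simp add: poly_map_def)
      then have "\<forall>X. P X i k = (\<Sum>\<alpha>\<in>monomial_exps n d. cf i k \<alpha> * mono n \<alpha> X)"
        unfolding cf_def by (rule someI_ex)
      then show ?thesis using True by (simp add: conv Fm_def f_def)
    qed
  qed
  have inv: "\<forall>g. g permutes {..<n} \<longrightarrow> (\<forall>t\<in>DD n d. f (tact g t) = f t)"
    using equivariant_Fm_inv P(2) PF by metis
  have supp: "\<forall>t\<in>DD n d. f t \<noteq> 0 \<longrightarrow> card (Sp t) \<le> n"
  proof (intro ballI impI)
    fix t assume t: "t \<in> DD n d"
    have "Sp t \<subseteq> {..<n}" using t by (auto simp: DD_def Sp_def Ms_def)
    then show "card (Sp t) \<le> n" using card_mono[of "{..<n}" "Sp t"] by simp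
  qed
  obtain c where c: "\<forall>t\<in>DD n d. f t = (\<Sum>C\<in>Bclasses n d. c C * NN n (hr n d C) t)"
    using span_ind[OF inv supp] by (auto simp: insp_def)
  show ?thesis
  proof (rule exI[of _ c], intro allI)
    fix X i k
    have "P X i k = Fm n d (\<lambda>t. \<Sum>C\<in>Bclasses n d. c C * NN n (hr n d C) t) X i k"
      using Fm_cong[OF c] PF by simp
    also have "\<dots> = (\<Sum>C\<in>Bclasses n d. c C * Fm n d (NN n (hr n d C)) X i k)"
      by (rule Fm_lin[symmetric, OF finite_Bclasses])
    also have "\<dots> = (\<Sum>C\<in>Bclasses n d. c C * PC n C X i k)"
      by (rule sum.cong) (simp_all add: PC_hr)
    finally show "P X i k = (\<Sum>C\<in>Bclasses n d. c C * PC n C X i k)" .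
  qed
qed

theorem theorem1:
  fixes n d :: nat
  assumes "n \<ge> 1"
  shows "finite (Bclasses n d) \<and>
    (\<forall>C \<in> Bclasses n d. poly_map n d (PC n C) \<and> equivariant n (PC n C)) \<and>
    (\<forall>c :: mgraph set \<Rightarrow> real.
        (\<forall>X i k. (\<Sum>C \<in> Bclasses n d. c C * PC n C X i k) = 0) \<longrightarrow>
        (\<forall>C \<in> Bclasses n d. c C = 0)) \<and>
    (\<forall>P. poly_map n d P \<and> equivariant n P \<longrightarrow>
        (\<exists>c :: mgraph set \<Rightarrow> real. \<forall>X i k. P X i k = (\<Sum>C \<in> Bclasses n d. c C * PC n C X i k)))"
  using finite_Bclasses part2 part3 part4 by blast


end
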